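(* Suppose $P_{II*}\subseteq P_{II}$ is a chain (totally ordered by inclusion). Then $\mathcal C_{\Xi\text{-unc}}\neq\emptyset$ for every filter $\Xi\in P_{III*}$.
   Context: Let $n\ge1$, $L=\{1,\dots,n\}$, and for $i\in L$ let $\mathcal H_i$ be a Hilbert space with $1<\dim\mathcal H_i<\infty$; $\mathcal H_X=\bigotimes_{i\in X}\mathcal H_i$ and $\mathcal D_X$ is the set of density operators on $\mathcal H_X$. $P_I$ is the set of partitions of $L$ ordered by refinement. For $\xi\in P_I$, $\mathcal D_{\xi\text{-unc}}=\{\varrho\in\mathcal D_L:\varrho=\bigotimes_{X\in\xi}\varrho_X,\ \varrho_X\in\mathcal D_X\}$, and for $S\subseteq P_I$, $\mathcal D_{S\text{-unc}}=\bigcup_{\xi\in S}\mathcal D_{\xi\text{-unc}}$. $P_{II}$ is the set of nonempty down-sets of $P_I$, ordered by inclusion; $P_{II*}$ is a nonempty subset of $P_{II}$ and $P_{III*}$ is the set of nonempty up-sets of $P_{II*}$. For $\Xi\in P_{III*}$: $\overline\Xi=P_{II*}\setminus\Xi$ and $\mathcal C_{\Xi\text{-unc}}=\bigcap_{\boldsymbol\xi'\in\overline\Xi}(\mathcal D_L\setminus\mathcal D_{\boldsymbol\xi'\text{-unc}})\cap\bigcap_{\boldsymbol\xi\in\Xi}\mathcal D_{\boldsymbol\xi\text{-unc}}$. *)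

theory Defs
  imports Complex_Main "HOL-Library.FuncSet" "HOL-Library.Disjoint_Sets"
begin

text \<open>Finite-dimensional Hilbert space H_i is modelled as C^(d i) with its standard
  basis; H_X = tensor product over i in X has orthonormal basis indexed by
  extensional tuples a in PiE X (%i. {..<d i}). Operators on H_X are matrices
  indexed by such tuples (entries outside the index set are required to vanish).\<close>

type_synonym idx = "nat \<Rightarrow> nat"
type_synonym mat = "idx \<Rightarrow> idx \<Rightarrow> complex"

definition basis_idx :: "(nat \<Rightarrow> nat) \<Rightarrow> nat set \<Rightarrow> idx set" where
  "basis_idx d X = (\<Pi>\<^sub>E i\<in>X. {..<d i})"

definition density_ops :: "(nat \<Rightarrow> nat) \<Rightarrow> nat set \<Rightarrow> mat set" where
  "density_ops d X = {\<rho>.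
     (\<forall>a b. (a \<notin> basis_idx d X \<or> b \<notin> basis_idx d X) \<longrightarrow> \<rho> a b = 0) \<and>
     (\<forall>v :: idx \<Rightarrow> complex.
        let q = (\<Sum>a\<in>basis_idx d X. \<Sum>b\<in>basis_idx d X. cnj (v a) * \<rho> a b * v b)
        in Im q = 0 \<and> Re q \<ge> 0) \<and>
     (\<Sum>a\<in>basis_idx d X. \<rho> a a) = 1}"

definition P_I :: "nat \<Rightarrow> nat set set set" where
  "P_I n = {\<xi>. partition_on {1..n} \<xi>}"

definition refines :: "nat set set \<Rightarrow> nat set set \<Rightarrow> bool" where
  "refines \<xi> \<eta> \<longleftrightarrow> (\<forall>X\<in>\<xi>. \<exists>Y\<in>\<eta>. X \<subseteq> Y)"

definition D_unc :: "(nat \<Rightarrow> nat) \<Rightarrow> nat \<Rightarrow> nat set set \<Rightarrow> mat set" where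
  "D_unc d n \<xi> = {\<rho> \<in> density_ops d {1..n}. \<exists>\<rho>X :: nat set \<Rightarrow> mat.
      (\<forall>X\<in>\<xi>. \<rho>X X \<in> density_ops d X) \<and>
      (\<forall>a\<in>basis_idx d {1..n}. \<forall>b\<in>basis_idx d {1..n}.
          \<rho> a b = (\<Prod>X\<in>\<xi>. \<rho>X X (restrict a X) (restrict b X)))}"

definition D_S_unc :: "(nat \<Rightarrow> nat) \<Rightarrow> nat \<Rightarrow> nat set set set \<Rightarrow> mat set" where
  "D_S_unc d n S = (\<Union>\<xi>\<in>S. D_unc d n \<xi>)"

definition P_II :: "nat \<Rightarrow> nat set set set set" where
  "P_II n = {S. S \<subseteq> P_I n \<and> S \<noteq> {} \<and>
     (\<forall>\<eta>\<in>S. \<forall>\<xi>\<in>P_I n. refines \<xi> \<eta> \<longrightarrow> \<xi> \<in> S)}"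

definition P_III :: "nat set set set set \<Rightarrow> nat set set set set set" where
  "P_III P2s = {\<Xi>. \<Xi> \<subseteq> P2s \<and> \<Xi> \<noteq> {} \<and>
     (\<forall>a\<in>\<Xi>. \<forall>b\<in>P2s. a \<subseteq> b \<longrightarrow> b \<in> \<Xi>)}"

definition is_filter :: "nat set set set set \<Rightarrow> nat set set set set \<Rightarrow> bool" where
  "is_filter P2s \<Xi> \<longleftrightarrow> \<Xi> \<in> P_III P2s \<and>
     (\<forall>a\<in>\<Xi>. \<forall>b\<in>\<Xi>. \<exists>c\<in>\<Xi>. c \<subseteq> a \<and> c \<subseteq> b)"

definition C_unc :: "(nat \<Rightarrow> nat) \<Rightarrow> nat \<Rightarrow> nat set set set set \<Rightarrow> nat set set set set \<Rightarrow> mat set" where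
  "C_unc d n P2s \<Xi> =
     {\<rho> \<in> density_ops d {1..n}.
        (\<forall>\<xi>'\<in>P2s - \<Xi>. \<rho> \<notin> D_S_unc d n \<xi>') \<and> (\<forall>\<xi>\<in>\<Xi>. \<rho> \<in> D_S_unc d n \<xi>)}"

end

theory Submission
  imports Defs
begin

lemma diag_psd:
  fixes w :: "idx \<Rightarrow> real" and v :: "idx \<Rightarrow> complex"
  assumes "finite B" "\<And>a. a\<in>B \<Longrightarrow> w a \<ge> 0"
  shows "let q = (\<Sum>a\<in>B. \<Sum>b\<in>B. cnj (v a) * (if a = b then complex_of_real (w a) else 0) * v b) in Im q = 0 \<and> Re q \<ge> 0"
proof -
  have "(\<Sum>a\<in>B. \<Sum>b\<in>B. cnj (v a) * (if a = b then complex_of_real (w a) else 0) * v b)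
      = (\<Sum>a\<in>B. complex_of_real (w a * (cmod (v a))^2))"
  proof (rule sum.cong[OF refl])
    fix a assume a: "a\<in>B"
    have "\<And>b. cnj (v a) * (if a = b then complex_of_real (w a) else 0) * v b
        = (if a = b then cnj (v a) * complex_of_real (w a) * v a else 0)" by simp
    hence "(\<Sum>b\<in>B. cnj (v a) * (if a = b then complex_of_real (w a) else 0) * v b)
        = cnj (v a) * complex_of_real (w a) * v a" using a assms(1) by simp
    also have "\<dots> = complex_of_real (w a) * (v a * cnj (v a))" by (simp add: mult_ac)
    also have "\<dots> = complex_of_real (w a) * complex_of_real ((cmod (v a))^2)"
      by (simp only: complex_norm_square)
    also have "\<dots> = complex_of_real (w a * (cmod (v a))^2)" by simp
    finally show "(\<Sum>b\<in>B. cnj (v a) * (if a = b then complex_of_real (w a) else 0) * v b) = complex_of_real (w a * (cmod (v a))^2)" .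
  qed
  moreover have "Im (\<Sum>a\<in>B. complex_of_real (w a * (cmod (v a))^2)) = 0"
    by (simp add: Im_sum)
  moreover have "Re (\<Sum>a\<in>B. complex_of_real (w a * (cmod (v a))^2)) \<ge> 0"
    by (simp add: Re_sum sum_nonneg assms(2))
  ultimately show ?thesis by (simp add: Let_def)
qed

definition zI :: "nat set \<Rightarrow> idx" where "zI X = restrict (\<lambda>_. 0) X"
definition oI :: "nat set \<Rightarrow> idx" where "oI X = restrict (\<lambda>_. 1) X"
definition blk :: "nat set \<Rightarrow> mat" where
  "blk X = (\<lambda>\<alpha> \<beta>. if \<alpha> = \<beta> \<and> (\<alpha> = zI X \<or> \<alpha> = oI X) then 1/2 else 0)"
definition gA :: "(nat \<Rightarrow> nat) \<Rightarrow> nat \<Rightarrow> nat set set \<Rightarrow> idx set" where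
  "gA d n \<xi> = {a \<in> basis_idx d {1..n}. \<forall>X\<in>\<xi>. restrict a X = zI X \<or> restrict a X = oI X}"
definition ghz :: "(nat \<Rightarrow> nat) \<Rightarrow> nat \<Rightarrow> nat set set \<Rightarrow> mat" where
  "ghz d n \<xi> = (\<lambda>a b. if a = b \<and> a \<in> gA d n \<xi> then complex_of_real ((1/2)^card \<xi>) else 0)"

lemma zo_in:
  assumes "X \<subseteq> {1..n}" "\<forall>i\<in>{1..n}. 1 < d i"
  shows "zI X \<in> basis_idx d X" "oI X \<in> basis_idx d X"
proof -
  have "\<forall>i\<in>X. 0 < d i \<and> 1 < d i" using assms by fastforce
  thus "zI X \<in> basis_idx d X" "oI X \<in> basis_idx d X"
    unfolding basis_idx_def zI_def oI_def by (auto simp: restrict_PiE_iff)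
qed

lemma zo_neq: "X \<noteq> {} \<Longrightarrow> zI X \<noteq> oI X"
proof
  assume "X \<noteq> {}" "zI X = oI X"
  then obtain i where "i \<in> X" by blast
  with \<open>zI X = oI X\<close> have "zI X i = oI X i" by simp
  with \<open>i\<in>X\<close> show False by (simp add: zI_def oI_def)
qed

lemma finite_basis: "finite X \<Longrightarrow> finite (basis_idx d X)"
  unfolding basis_idx_def by (rule finite_PiE) auto

lemma blk_density:
  assumes "X \<subseteq> {1..n}" "X \<noteq> {}" "\<forall>i\<in>{1..n}. 1 < d i"
  shows "blk X \<in> density_ops d X"
proof -
  have fin: "finite (basis_idx d X)" using assms(1) finite_subset by (intro finite_basis) auto
  note zo = zo_in[OF assms(1) assms(3)]
  define w where "w = (\<lambda>a. if a = zI X \<or> a = oI X then (1/2::real) else 0)"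
  have eq: "blk X = (\<lambda>a b. if a = b then complex_of_real (w a) else 0)"
    by (auto simp: blk_def w_def fun_eq_iff)
  have psd: "\<forall>v :: idx \<Rightarrow> complex.
        let q = (\<Sum>a\<in>basis_idx d X. \<Sum>b\<in>basis_idx d X. cnj (v a) * blk X a b * v b)
        in Im q = 0 \<and> Re q \<ge> 0"
    unfolding eq by (intro allI diag_psd fin) (simp add: w_def)
  have "(\<Sum>a\<in>basis_idx d X. blk X a a) = (\<Sum>a\<in>basis_idx d X. if a \<in> {zI X, oI X} then 1/2 else 0)"
    by (simp add: blk_def)
  also have "\<dots> = (\<Sum>a\<in>basis_idx d X \<inter> {zI X, oI X}. 1/2)"
    using sum.inter_restrict[OF fin, of "\<lambda>_. 1/2::complex" "{zI X, oI X}"] by (simp only: insert_iff empty_iff simp_thms)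
  also have "basis_idx d X \<inter> {zI X, oI X} = {zI X, oI X}" using zo by auto
  also have "(\<Sum>a\<in>{zI X, oI X}. (1/2::complex)) = 1" using zo_neq[OF assms(2)] by simp
  finally have tr: "(\<Sum>a\<in>basis_idx d X. blk X a a) = 1" .
  have van: "\<forall>a b. (a \<notin> basis_idx d X \<or> b \<notin> basis_idx d X) \<longrightarrow> blk X a b = 0"
    using zo by (auto simp: blk_def)
  show ?thesis unfolding density_ops_def using van psd tr by blast
qed


lemma part_facts:
  assumes "partition_on L \<xi>"
  shows "\<And>X. X \<in> \<xi> \<Longrightarrow> X \<subseteq> L" "\<And>X. X \<in> \<xi> \<Longrightarrow> X \<noteq> {}"
    "\<And>i. i \<in> L \<Longrightarrow> \<exists>X\<in>\<xi>. i \<in> X"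
    "\<And>X Y i. X \<in> \<xi> \<Longrightarrow> Y \<in> \<xi> \<Longrightarrow> i \<in> X \<Longrightarrow> i \<in> Y \<Longrightarrow> X = Y"
  using partition_onD1[OF assms] partition_onD3[OF assms] disjointD[OF partition_onD2[OF assms]]
  by blast+

lemma part_finite: "partition_on {1..(n::nat)} \<xi> \<Longrightarrow> finite \<xi>"
  by (rule finite_elements) auto

lemma card_gA:
  assumes P: "partition_on {1..n} \<xi>" and d: "\<forall>i\<in>{1..n}. 1 < d i"
  shows "card (gA d n \<xi>) = 2 ^ card \<xi>"
proof -
  note pf = part_facts[OF P]
  define f where "f T = restrict (\<lambda>i. if \<exists>X\<in>T. i \<in> X then (1::nat) else 0) {1..n}" for T
  have fval: "f T i = (if X \<in> T then 1 else 0)" if "T \<subseteq> \<xi>" "X \<in> \<xi>" "i \<in> X" for T X i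
  proof -
    have iL: "i \<in> {1..n}" using pf(1) that by blast
    have "(\<exists>Y\<in>T. i \<in> Y) \<longleftrightarrow> X \<in> T" using pf(4)[of X _ i] that by blast
    thus ?thesis using iL by (simp add: f_def)
  qed
  have d0: "\<forall>i\<in>{1..n}. 0 < d i \<and> 1 < d i" using d by fastforce
  have fB: "f T \<in> basis_idx d {1..n}" for T
    unfolding f_def basis_idx_def using d0 by (auto simp: restrict_PiE_iff)
  have inj: "inj_on f (Pow \<xi>)"
  proof (rule inj_onI)
    fix T T' assume T: "T \<in> Pow \<xi>" and T': "T' \<in> Pow \<xi>" and eq: "f T = f T'"
    show "T = T'"
    proof (rule ccontr)
      assume "T \<noteq> T'"
      then obtain X where X: "X \<in> \<xi>" "(X \<in> T) \<noteq> (X \<in> T')" using T T' by blast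
      then obtain i where "i \<in> X" using pf(2) by blast
      have "f T i = f T' i" using eq by simp
      thus False using fval[of T X i] fval[of T' X i] X T T' \<open>i\<in>X\<close> by (auto split: if_splits)
    qed
  qed
  have img: "f ` Pow \<xi> = gA d n \<xi>"
  proof
    show "f ` Pow \<xi> \<subseteq> gA d n \<xi>"
    proof
      fix a assume "a \<in> f ` Pow \<xi>"
      then obtain T where T: "T \<subseteq> \<xi>" "a = f T" by blast
      have "restrict a X = zI X \<or> restrict a X = oI X" if X: "X \<in> \<xi>" for X
      proof -
        have "restrict a X = restrict (\<lambda>_. if X \<in> T then 1 else 0) X"
          by (rule restrict_ext) (use fval[OF T(1) X] T(2) in auto)
        thus ?thesis by (auto simp: zI_def oI_def)
      qed
      thus "a \<in> gA d n \<xi>" using fB T by (auto simp: gA_def)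
    qed
  next
    show "gA d n \<xi> \<subseteq> f ` Pow \<xi>"
    proof
      fix a assume a: "a \<in> gA d n \<xi>"
      define T where "T = {X\<in>\<xi>. restrict a X = oI X}"
      have "a = f T"
      proof (rule PiE_ext)
        show "a \<in> (\<Pi>\<^sub>E i\<in>{1..n}. {..<d i})" using a by (simp add: gA_def basis_idx_def)
        show "f T \<in> (\<Pi>\<^sub>E i\<in>{1..n}. {..<d i})" using fB by (simp add: basis_idx_def)
        fix i assume i: "i \<in> {1..n}"
        then obtain X where X: "X \<in> \<xi>" "i \<in> X" using pf(3) by blast
        have za: "restrict a X = zI X \<or> restrict a X = oI X" using a X by (auto simp: gA_def)
        have ai: "a i = restrict a X i" using X by simp
        show "a i = f T i"
        proof (cases "restrict a X = oI X")
          case True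
          then show ?thesis using fval[of T X i] X ai by (auto simp: T_def oI_def)
        next
          case False
          then have "restrict a X = zI X" using za by blast
          then show ?thesis using fval[of T X i] X ai False by (auto simp: T_def zI_def)
        qed
      qed
      moreover have "T \<in> Pow \<xi>" by (auto simp: T_def)
      ultimately show "a \<in> f ` Pow \<xi>" by blast
    qed
  qed
  have "card (gA d n \<xi>) = card (Pow \<xi>)" using inj img card_image by fastforce
  also have "\<dots> = 2 ^ card \<xi>" using part_finite[OF P] by (simp add: card_Pow)
  finally show ?thesis .
qed

lemma ghz_density:
  assumes P: "partition_on {1..n} \<xi>" and d: "\<forall>i\<in>{1..n}. 1 < d i"
  shows "ghz d n \<xi> \<in> density_ops d {1..n}"
proof -
  have fin: "finite (basis_idx d {1..n})" by (rule finite_basis) simp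
  define w where "w = (\<lambda>a. if a \<in> gA d n \<xi> then ((1/2::real)^card \<xi>) else 0)"
  have eq: "ghz d n \<xi> = (\<lambda>a b. if a = b then complex_of_real (w a) else 0)"
    by (auto simp: ghz_def w_def fun_eq_iff)
  have psd: "\<forall>v :: idx \<Rightarrow> complex.
        let q = (\<Sum>a\<in>basis_idx d {1..n}. \<Sum>b\<in>basis_idx d {1..n}. cnj (v a) * ghz d n \<xi> a b * v b)
        in Im q = 0 \<and> Re q \<ge> 0"
    unfolding eq by (intro allI diag_psd fin) (simp add: w_def)
  have sub: "gA d n \<xi> \<subseteq> basis_idx d {1..n}" by (auto simp: gA_def)
  have "(\<Sum>a\<in>basis_idx d {1..n}. ghz d n \<xi> a a)
     = (\<Sum>a\<in>basis_idx d {1..n}. if a \<in> gA d n \<xi> then complex_of_real ((1/2)^card \<xi>) else 0)"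
    by (simp add: ghz_def)
  also have "\<dots> = (\<Sum>a\<in>basis_idx d {1..n} \<inter> gA d n \<xi>. complex_of_real ((1/2)^card \<xi>))"
    by (rule sum.inter_restrict[OF fin, symmetric])
  also have "basis_idx d {1..n} \<inter> gA d n \<xi> = gA d n \<xi>" using sub by blast
  also have "(\<Sum>a\<in>gA d n \<xi>. complex_of_real ((1/2)^card \<xi>)) = of_nat (2 ^ card \<xi>) * (1/2)^card \<xi>"
    using card_gA[OF P d] by simp
  also have "\<dots> = 1" by (simp flip: power_mult_distrib)
  finally have tr: "(\<Sum>a\<in>basis_idx d {1..n}. ghz d n \<xi> a a) = 1" .
  have van: "\<forall>a b. (a \<notin> basis_idx d {1..n} \<or> b \<notin> basis_idx d {1..n}) \<longrightarrow> ghz d n \<xi> a b = 0"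
    using sub by (auto simp: ghz_def)
  show ?thesis unfolding density_ops_def using van psd tr by blast
qed


lemma ghz_prod:
  assumes P: "partition_on {1..n} \<xi>" and d: "\<forall>i\<in>{1..n}. 1 < d i"
    and a: "a \<in> basis_idx d {1..n}" and b: "b \<in> basis_idx d {1..n}"
  shows "ghz d n \<xi> a b = (\<Prod>X\<in>\<xi>. blk X (restrict a X) (restrict b X))"
proof (cases "a = b \<and> a \<in> gA d n \<xi>")
  case True
  then have "\<And>X. X \<in> \<xi> \<Longrightarrow> blk X (restrict a X) (restrict b X) = 1/2"
    by (auto simp: blk_def gA_def)
  then have "(\<Prod>X\<in>\<xi>. blk X (restrict a X) (restrict b X)) = (\<Prod>X\<in>\<xi>. 1/2)"
    by (rule prod.cong[OF refl])
  then show ?thesis using True by (auto simp add: ghz_def)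
next
  case False
  note pf = part_facts[OF P]
  have "\<exists>X\<in>\<xi>. blk X (restrict a X) (restrict b X) = 0"
  proof (cases "a = b")
    case True
    then have "a \<notin> gA d n \<xi>" using False by blast
    then obtain X where "X \<in> \<xi>" "restrict a X \<noteq> zI X" "restrict a X \<noteq> oI X"
      using a by (auto simp: gA_def)
    then show ?thesis using True by (auto simp: blk_def)
  next
    case ne: False
    have "\<exists>i\<in>{1..n}. a i \<noteq> b i"
    proof (rule ccontr)
      assume "\<not> ?thesis"
      then have "a = b" using a b unfolding basis_idx_def by (intro PiE_ext) auto
      with ne show False by blast
    qed
    then obtain i where i: "i \<in> {1..n}" "a i \<noteq> b i" by blast
    then obtain X where X: "X \<in> \<xi>" "i \<in> X" using pf(3) by blast
    have "restrict a X \<noteq> restrict b X"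
    proof
      assume "restrict a X = restrict b X"
      then have "restrict a X i = restrict b X i" by simp
      with X i show False by simp
    qed
    then show ?thesis using X by (auto simp: blk_def)
  qed
  then have "(\<Prod>X\<in>\<xi>. blk X (restrict a X) (restrict b X)) = 0"
    using part_finite[OF P] by (simp add: prod_zero_iff)
  then show ?thesis using False by (simp add: ghz_def)
qed

lemma ghz_unc:
  assumes P: "partition_on {1..n} \<xi>" and d: "\<forall>i\<in>{1..n}. 1 < d i"
  shows "ghz d n \<xi> \<in> D_unc d n \<xi>"
proof -
  note pf = part_facts[OF P]
  have "\<forall>X\<in>\<xi>. blk X \<in> density_ops d X" using blk_density pf(1,2) d by blast
  moreover have "\<forall>a\<in>basis_idx d {1..n}. \<forall>b\<in>basis_idx d {1..n}.
      ghz d n \<xi> a b = (\<Prod>X\<in>\<xi>. blk X (restrict a X) (restrict b X))"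
    using ghz_prod[OF P d] by blast
  ultimately show ?thesis unfolding D_unc_def using ghz_density[OF P d] by blast
qed

lemma ghz_not:
  assumes P: "partition_on {1..n} \<xi>" and Q: "partition_on {1..n} \<eta>"
    and d: "\<forall>i\<in>{1..n}. 1 < d i" and nr: "\<not> refines \<xi> \<eta>"
  shows "ghz d n \<xi> \<notin> D_unc d n \<eta>"
proof
  assume "ghz d n \<xi> \<in> D_unc d n \<eta>"
  then obtain \<sigma> where \<sigma>: "\<forall>a\<in>basis_idx d {1..n}. \<forall>b\<in>basis_idx d {1..n}.
          ghz d n \<xi> a b = (\<Prod>Y\<in>\<eta>. \<sigma> Y (restrict a Y) (restrict b Y))"
    unfolding D_unc_def by blast
  note pf = part_facts[OF P] and qf = part_facts[OF Q]
  obtain X where X: "X \<in> \<xi>" "\<forall>Y\<in>\<eta>. \<not> X \<subseteq> Y" using nr unfolding refines_def by blast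
  obtain i where i: "i \<in> X" using pf(2) X by blast
  have iL: "i \<in> {1..n}" using pf(1) X i by blast
  obtain Y1 where Y1: "Y1 \<in> \<eta>" "i \<in> Y1" using qf(3) iL by blast
  obtain j where j: "j \<in> X" "j \<notin> Y1" using X Y1 by blast
  have jL: "j \<in> {1..n}" using pf(1) X j by blast
  define c where "c = complex_of_real ((1/2)^card \<xi>)"
  define a0 where "a0 = zI {1..n}"
  define a1 where "a1 = oI {1..n}"
  define m where "m = restrict (\<lambda>k. if k \<in> Y1 then 0 else (1::nat)) {1..n}"
  define m' where "m' = restrict (\<lambda>k. if k \<in> Y1 then 1 else (0::nat)) {1..n}"
  have d0: "\<forall>i\<in>{1..n}. 0 < d i \<and> 1 < d i" using d by fastforce
  have B: "a0 \<in> basis_idx d {1..n}" "a1 \<in> basis_idx d {1..n}" "m \<in> basis_idx d {1..n}"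
    "m' \<in> basis_idx d {1..n}"
    unfolding a0_def a1_def m_def m'_def zI_def oI_def basis_idx_def using d0
    by (auto simp: restrict_PiE_iff)
  have a0g: "a0 \<in> gA d n \<xi>"
  proof -
    have "restrict a0 Z = zI Z" if "Z \<in> \<xi>" for Z
      using pf(1)[OF that] by (simp add: a0_def zI_def Int_absorb1)
    thus ?thesis using B by (simp add: gA_def)
  qed
  have a1g: "a1 \<in> gA d n \<xi>"
  proof -
    have "restrict a1 Z = oI Z" if "Z \<in> \<xi>" for Z
      using pf(1)[OF that] by (simp add: a1_def oI_def Int_absorb1)
    thus ?thesis using B by (simp add: gA_def)
  qed
  have mg: "m \<notin> gA d n \<xi>"
  proof
    assume "m \<in> gA d n \<xi>"
    then have "restrict m X = zI X \<or> restrict m X = oI X" using X by (simp add: gA_def)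
    moreover have "restrict m X j = 1" using j jL by (simp add: m_def)
    moreover have "restrict m X i = 0" using i iL Y1 by (simp add: m_def)
    moreover have "zI X j = 0" "oI X i = 1" using i j by (simp_all add: zI_def oI_def)
    ultimately show False by (metis zero_neq_one)
  qed
  define s where "s Y a = \<sigma> Y (restrict a Y) (restrict a Y)" for Y a
  have "ghz d n \<xi> a0 a0 * ghz d n \<xi> a1 a1 = (\<Prod>Y\<in>\<eta>. s Y a0 * s Y a1)"
    using \<sigma> B by (simp add: s_def prod.distrib)
  also have "\<dots> = (\<Prod>Y\<in>\<eta>. s Y m * s Y m')"
  proof (rule prod.cong[OF refl])
    fix Y assume Y: "Y \<in> \<eta>"
    have YL: "Y \<subseteq> {1..n}" using qf(1) Y by blast
    show "s Y a0 * s Y a1 = s Y m * s Y m'"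
    proof (cases "Y = Y1")
      case True
      have "restrict m Y = restrict a0 Y"
        by (rule restrict_ext) (use YL True in \<open>auto simp: m_def a0_def zI_def\<close>)
      moreover have "restrict m' Y = restrict a1 Y"
        by (rule restrict_ext) (use YL True in \<open>auto simp: m'_def a1_def oI_def\<close>)
      ultimately show ?thesis by (simp add: s_def)
    next
      case False
      then have dj: "Y \<inter> Y1 = {}" using qf(4) Y Y1(1) by blast
      have "restrict m Y = restrict a1 Y"
        by (rule restrict_ext) (use YL dj in \<open>auto simp: m_def a1_def oI_def\<close>)
      moreover have "restrict m' Y = restrict a0 Y"
        by (rule restrict_ext) (use YL dj in \<open>auto simp: m'_def a0_def zI_def\<close>)
      ultimately show ?thesis by (simp add: s_def mult.commute)
    qed
  qed
  also have "\<dots> = ghz d n \<xi> m m * ghz d n \<xi> m' m'"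
    using \<sigma> B by (simp add: s_def prod.distrib)
  finally have "ghz d n \<xi> a0 a0 * ghz d n \<xi> a1 a1 = ghz d n \<xi> m m * ghz d n \<xi> m' m'" .
  then show False using a0g a1g mg by (simp add: ghz_def)
qed


theorem proposition5:
  fixes n :: nat and d :: "nat \<Rightarrow> nat"
    and P2s :: "nat set set set set" and \<Xi> :: "nat set set set set"
  assumes "n \<ge> 1"
    and "\<forall>i\<in>{1..n}. 1 < d i"
    and "P2s \<subseteq> P_II n" and "P2s \<noteq> {}"
    and "\<forall>a\<in>P2s. \<forall>b\<in>P2s. a \<subseteq> b \<or> b \<subseteq> a"
    and "\<Xi> \<in> P_III P2s" and "is_filter P2s \<Xi>"
  shows "C_unc d n P2s \<Xi> \<noteq> {}"
proof -
  note d = assms(2) and chain = assms(5)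
  have XiP: "\<Xi> \<subseteq> P2s" "\<Xi> \<noteq> {}" "\<forall>a\<in>\<Xi>. \<forall>b\<in>P2s. a \<subseteq> b \<longrightarrow> b \<in> \<Xi>"
    using assms(6) by (auto simp: P_III_def)
  have finPI: "finite (P_I n)"
  proof -
    have "P_I n \<subseteq> Pow (Pow {1..n})" by (auto simp: P_I_def dest: partition_onD1)
    thus ?thesis by (rule finite_subset) simp
  qed
  have PII: "\<And>S. S \<in> P2s \<Longrightarrow> S \<subseteq> P_I n \<and> S \<noteq> {} \<and>
     (\<forall>\<eta>\<in>S. \<forall>\<xi>\<in>P_I n. refines \<xi> \<eta> \<longrightarrow> \<xi> \<in> S)"
    using assms(3) by (auto simp: P_II_def)
  have finS: "finite S" if "S \<in> P2s" for S
    using finite_subset[OF conjunct1[OF PII[OF that]] finPI] .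
  obtain S00 where "S00 \<in> \<Xi>" using XiP by blast
  then obtain S0 where S0: "S0 \<in> \<Xi>" "\<forall>S. S \<in> \<Xi> \<longrightarrow> card S0 \<le> card S"
    using ex_has_least_nat[of "\<lambda>S. S \<in> \<Xi>" S00 card] by blast
  have S0P: "S0 \<in> P2s" using S0 XiP by blast
  have S0min: "\<forall>S\<in>\<Xi>. S0 \<subseteq> S"
  proof
    fix S assume S: "S \<in> \<Xi>"
    then have SP: "S \<in> P2s" using XiP by blast
    show "S0 \<subseteq> S"
    proof (cases "S \<subseteq> S0")
      case True
      have "card S0 \<le> card S" using S0 S by blast
      have "card S \<le> card S0" by (rule card_mono[OF finS[OF S0P] True])
      then have "S = S0" using card_subset_eq[OF finS[OF S0P] True] \<open>card S0 \<le> card S\<close> by simp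
      thus ?thesis by simp
    next
      case False
      thus ?thesis using chain[rule_format, OF SP S0P] by blast
    qed
  qed
  have compl: "S' \<subseteq> S0 \<and> S' \<noteq> S0" if S': "S' \<in> P2s - \<Xi>" for S'
  proof -
    have "\<not> S0 \<subseteq> S'" using XiP(3) S0(1) S' by blast
    moreover have "S0 \<subseteq> S' \<or> S' \<subseteq> S0" using chain S0P S' by blast
    ultimately show ?thesis using S' S0(1) by blast
  qed
  obtain \<xi> where \<xi>: "\<xi> \<in> S0" "\<forall>S'\<in>P2s - \<Xi>. \<xi> \<notin> S'"
  proof (cases "P2s - \<Xi> = {}")
    case True
    then show ?thesis using that PII[OF S0P] by blast
  next
    case False
    then obtain T where "T \<in> P2s - \<Xi>" by blast
    then obtain S1 where S1: "S1 \<in> P2s - \<Xi>"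
      "\<forall>S. S \<in> P2s - \<Xi> \<longrightarrow> card (P_I n) - card S1 \<le> card (P_I n) - card S"
      using ex_has_least_nat[of "\<lambda>S. S \<in> P2s - \<Xi>" T "\<lambda>S. card (P_I n) - card S"] by blast
    have S1max: "\<forall>S'\<in>P2s - \<Xi>. S' \<subseteq> S1"
    proof
      fix S' assume S': "S' \<in> P2s - \<Xi>"
      show "S' \<subseteq> S1"
      proof (cases "S1 \<subseteq> S'")
        case True
        have S'P0: "S' \<in> P2s" using S' by blast
        have S1P0: "S1 \<in> P2s" using S1(1) by blast
        have c1: "card S' \<le> card (P_I n)" using card_mono[OF finPI conjunct1[OF PII[OF S'P0]]] .
        have c2: "card S1 \<le> card (P_I n)" using card_mono[OF finPI conjunct1[OF PII[OF S1P0]]] .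
        have "card (P_I n) - card S1 \<le> card (P_I n) - card S'" using S1(2) S' by blast
        then have "card S' \<le> card S1" using c1 c2 by arith
        have S'P: "S' \<in> P2s" using S' by blast
        have "card S1 \<le> card S'" by (rule card_mono[OF finS[OF S'P] True])
        then have "S1 = S'" using card_subset_eq[OF finS[OF S'P] True] \<open>card S' \<le> card S1\<close> by simp
        thus ?thesis by simp
      next
        case False
        have S'P: "S' \<in> P2s" using S' by blast
        have S1P: "S1 \<in> P2s" using S1(1) by blast
        thus ?thesis using chain[rule_format, OF S'P S1P] False by blast
      qed
    qed
    have "S1 \<subseteq> S0" "S1 \<noteq> S0" using compl[OF S1(1)] by auto
    then obtain x where "x \<in> S0" "x \<notin> S1" by blast
    then show ?thesis using that S1max by blast
  qed
  have \<xi>P: "partition_on {1..n} \<xi>" using \<xi>(1) PII[OF S0P] by (auto simp: P_I_def)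
  define \<rho> where "\<rho> = ghz d n \<xi>"
  have \<rho>u: "\<rho> \<in> D_unc d n \<xi>" unfolding \<rho>_def by (rule ghz_unc[OF \<xi>P d])
  have "\<rho> \<in> C_unc d n P2s \<Xi>"
    unfolding C_unc_def
  proof (intro CollectI conjI ballI)
    show "\<rho> \<in> density_ops d {1..n}" using \<rho>u unfolding D_unc_def by blast
  next
    fix S assume "S \<in> \<Xi>"
    then show "\<rho> \<in> D_S_unc d n S" using S0min \<xi>(1) \<rho>u unfolding D_S_unc_def by blast
  next
    fix S' assume S': "S' \<in> P2s - \<Xi>"
    show "\<rho> \<notin> D_S_unc d n S'"
    proof
      assume "\<rho> \<in> D_S_unc d n S'"
      then obtain \<eta> where \<eta>: "\<eta> \<in> S'" "\<rho> \<in> D_unc d n \<eta>" unfolding D_S_unc_def by blast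
      have S'P: "S' \<in> P2s" using S' by blast
      have \<eta>P: "\<eta> \<in> P_I n" using PII[OF S'P] \<eta>(1) by blast
      have \<xi>PI: "\<xi> \<in> P_I n" using \<xi>P by (simp add: P_I_def)
      have "refines \<xi> \<eta> \<Longrightarrow> \<xi> \<in> S'" using PII[OF S'P] \<eta>(1) \<xi>PI by blast
      moreover have "\<xi> \<notin> S'" using \<xi>(2) S' by blast
      ultimately have "\<not> refines \<xi> \<eta>" by blast
      moreover have "partition_on {1..n} \<eta>" using \<eta>P by (simp add: P_I_def)
      ultimately show False using ghz_not[OF \<xi>P _ d] \<eta>(2) unfolding \<rho>_def by blast
    qed
  qed
  then show ?thesis by blast
qed

end
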